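(* Fix $n$, and let $\mathcal C_0,\mathcal C_1,\dots,\mathcal C_k$ be subsets of $\{1,\dots,2n\}$ such that each $\mathcal C_i$ is a union of chains $C(u)$ ($u$ odd) and every chain $C(u)$ with $u$ odd in $\{1,\dots,2n\}$ lies in exactly one $\mathcal C_i$. Then $$\prod_{i=1}^k f^*(\mathcal C_i)\le f(n)\le 2^{|\mathcal C_0|}\prod_{i=1}^k f(\mathcal C_i).$$
   Context: A set of positive integers is primitive if no element divides another. For odd $u\le 2n$, $C(u)=\{u,2u,4u,\dots\}\cap\{1,\dots,2n\}$. $f(n)$ is the number of $n$-element primitive subsets of $\{1,\dots,2n\}$. For $X\subseteq\{1,\dots,2n\}$, $f(X)$ is the number of maximum-size primitive subsets of $X$, and $f^*(X)$ is the number of maximum-size primitive subsets $A\subseteq X$ such that every multiple in $\{1,\dots,2n\}$ of every element of $A$ belongs to $X$. *)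

theory Defs
  imports Main
begin

definition primitive :: "nat set \<Rightarrow> bool" where
  "primitive A \<longleftrightarrow> (\<forall>a\<in>A. \<forall>b\<in>A. a dvd b \<longrightarrow> a = b)"

definition chainC :: "nat \<Rightarrow> nat \<Rightarrow> nat set" where
  "chainC n u = {m \<in> {1..2*n}. \<exists>j::nat. m = u * 2^j}"

definition fn :: "nat \<Rightarrow> nat" where
  "fn n = card {A. A \<subseteq> {1..2*n} \<and> primitive A \<and> card A = n}"

definition max_prim :: "nat set \<Rightarrow> nat set \<Rightarrow> bool" where
  "max_prim X A \<longleftrightarrow> A \<subseteq> X \<and> primitive A \<and>
     (\<forall>B. B \<subseteq> X \<and> primitive B \<longrightarrow> card B \<le> card A)"

definition fX :: "nat set \<Rightarrow> nat" where
  "fX X = card {A. max_prim X A}"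

definition fstar :: "nat \<Rightarrow> nat set \<Rightarrow> nat" where
  "fstar n X = card {A. max_prim X A \<and>
     (\<forall>a\<in>A. \<forall>m\<in>{1..2*n}. a dvd m \<longrightarrow> m \<in> X)}"

end

theory Submission
  imports Defs "HOL-Library.FuncSet"
begin

function ch :: "nat \<Rightarrow> nat" where
 "ch m = (if m = 0 then 0 else if even m then ch (m div 2) else m)"
  by auto
termination by (relation "measure id") auto
declare ch.simps[simp del]

lemma ch1: "m > 0 \<Longrightarrow> odd (ch m) \<and> (\<exists>j. m = ch m * 2^j)"
proof (induction m rule: ch.induct)
  case (1 m)
  show ?case
  proof (cases "even m")
    case True
    then have "m div 2 > 0" using 1(2) by auto
    with 1(1) True 1(2) obtain j where "odd (ch (m div 2))" "m div 2 = ch (m div 2) * 2^j" by auto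
    moreover have "ch m = ch (m div 2)" using True 1(2) by (simp add: ch.simps)
    ultimately show ?thesis using True by (metis dvd_mult_div_cancel mult.commute mult.left_commute power_Suc)
  next
    case False
    then show ?thesis using 1(2) by (auto simp: ch.simps intro: exI[of _ 0])
  qed
qed

lemma ch2: "odd u \<Longrightarrow> ch (u * 2^j) = u"
proof (induction j)
  case 0 then show ?case by (auto simp: ch.simps)
next
  case (Suc j)
  have "u * 2^Suc j = 2 * (u*2^j)" by simp
  moreover have "u > 0" using Suc by (cases u) auto
  ultimately show ?case using Suc by (subst ch.simps) auto
qed

lemma ch_le: "m > 0 \<Longrightarrow> ch m \<le> m"
  using ch1[of m] by (metis dvd_imp_le dvd_triv_left)

lemma ch_pos: "m > 0 \<Longrightarrow> ch m > 0"
  using ch1[of m] by (metis odd_pos)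

lemma ch_dvd: "a > 0 \<Longrightarrow> b > 0 \<Longrightarrow> ch a = ch b \<Longrightarrow> a dvd b \<or> b dvd a"
proof -
  assume a: "a > 0" "b > 0" "ch a = ch b"
  obtain i where i: "a = ch a * 2^i" using ch1 a by blast
  obtain j where j: "b = ch b * 2^j" using ch1 a by blast
  show ?thesis
  proof (cases "i \<le> j")
    case True
    then have "(2::nat)^i dvd 2^j" by (simp add: le_imp_power_dvd)
    then show ?thesis using i j a(3) by (metis mult_dvd_mono dvd_refl)
  next
    case False
    then have "(2::nat)^j dvd 2^i" by (simp add: le_imp_power_dvd)
    then show ?thesis using i j a(3) by (metis mult_dvd_mono dvd_refl)
  qed
qed

lemma chainC_ch: "odd u \<Longrightarrow> chainC n u = {m \<in> {1..2*n}. ch m = u}"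
proof -
  assume u: "odd u"
  have "(\<exists>j. m = u * 2^j) \<longleftrightarrow> ch m = u" if "m \<ge> 1" for m
  proof
    assume "\<exists>j. m = u * 2^j" then show "ch m = u" using ch2 u by blast
  next
    assume "ch m = u" then show "\<exists>j. m = u * 2^j" using ch1[of m] that by auto
  qed
  then show ?thesis unfolding chainC_def by auto
qed

lemma prim_inj: "primitive B \<Longrightarrow> B \<subseteq> {1..2*n} \<Longrightarrow> inj_on ch B"
  unfolding inj_on_def primitive_def
  by (metis ch_dvd atLeastAtMost_iff less_le_trans subsetD zero_less_one)

lemma top_prim: "primitive {n+1..2*n}"
  unfolding primitive_def
proof (intro ballI impI)
  fix a b assume ab: "a \<in> {n+1..2*n}" "b \<in> {n+1..2*n}" "a dvd b"
  then obtain c where c: "b = a * c" by blast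
  show "a = b"
  proof (cases "c \<le> 1")
    case True then show ?thesis using c ab by (cases c) auto
  next
    case False then have "c \<ge> 2" by simp
    then have "b \<ge> a * 2" using c by simp
    then show ?thesis using ab by auto
  qed
qed

definition "Odd n = {u. odd u \<and> u \<le> 2*n}"

lemma card_Odd: "card (Odd n) = n"
proof -
  have "Odd n = (\<lambda>i. 2*i+1) ` {..<n}"
    unfolding Odd_def
    by (auto simp: image_iff elim!: oddE)
  moreover have "inj_on (\<lambda>i. 2*i+1::nat) {..<n}" by (auto simp: inj_on_def)
  ultimately show ?thesis by (simp add: card_image)
qed

lemma ch_top: "ch ` {n+1..2*n} = Odd n"
proof -
  have inj: "inj_on ch {n+1..2*n}" using prim_inj[OF top_prim] by auto
  have sub: "ch ` {n+1..2*n} \<subseteq> Odd n" unfolding Odd_def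
  proof
    fix x assume "x \<in> ch ` {n+1..2*n}"
    then obtain m where m: "m \<in> {n+1..2*n}" "x = ch m" by auto
    then have "m > 0" by auto
    then show "x \<in> {u. odd u \<and> u \<le> 2*n}" using ch1[of m] ch_le[of m] m by auto
  qed
  have "card (ch ` {n+1..2*n}) = n" using card_image[OF inj] by simp
  then show ?thesis using card_subset_eq[OF _ sub] card_Odd[of n] unfolding Odd_def by auto
qed

theorem mainTheorem9:
  fixes n k :: nat and C :: "nat \<Rightarrow> nat set"
  assumes sub: "\<forall>i\<le>k. C i \<subseteq> {1..2*n}"
    and unions: "\<forall>i\<le>k. \<exists>U. U \<subseteq> {u. odd u \<and> u \<le> 2*n} \<and> C i = \<Union> (chainC n ` U)"
    and exact: "\<forall>u. odd u \<and> u \<le> 2*n \<longrightarrow> (\<exists>!i. i \<le> k \<and> chainC n u \<subseteq> C i)"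
  shows "(\<Prod>i=1..k. fstar n (C i)) \<le> fn n \<and>
         fn n \<le> 2 ^ card (C 0) * (\<Prod>i=1..k. fX (C i))"
proof -
  have closed: "m' \<in> C i" if "i \<le> k" "m \<in> C i" "m' \<in> {1..2*n}" "ch m' = ch m" for i m m'
  proof -
    have "\<exists>U. U \<subseteq> {u. odd u \<and> u \<le> 2*n} \<and> C i = \<Union> (chainC n ` U)" using unions that(1) by simp
    then obtain U where U: "U \<subseteq> {u. odd u \<and> u \<le> 2*n}" "C i = \<Union> (chainC n ` U)" by (elim exE conjE)
    have "m \<in> \<Union> (chainC n ` U)" using U(2) that(2) by simp
    then obtain u where u: "u \<in> U" "m \<in> chainC n u" by (elim UnionE imageE) simp
    have ou: "odd u" using U u by auto
    then have "ch m = u" using u chainC_ch by auto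
    then have "m' \<in> chainC n u" using chainC_ch[OF ou] that by auto
    then show ?thesis using U u by auto
  qed
  have disj: "i = j" if "i \<le> k" "j \<le> k" "m \<in> C i" "m \<in> C j" for i j m
  proof -
    have "\<exists>U. U \<subseteq> {u. odd u \<and> u \<le> 2*n} \<and> C i = \<Union> (chainC n ` U)" using unions that(1) by simp
    then obtain U where U: "U \<subseteq> {u. odd u \<and> u \<le> 2*n}" "C i = \<Union> (chainC n ` U)" by (elim exE conjE)
    have "m \<in> \<Union> (chainC n ` U)" using U(2) that(3) by simp
    then obtain u where u: "u \<in> U" "m \<in> chainC n u" by (elim UnionE imageE) simp
    have ou: "odd u" "u \<le> 2*n" using U u by auto
    have m: "m \<in> {1..2*n}" "ch m = u" using u chainC_ch[OF ou(1)] by auto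
    have "chainC n u \<subseteq> C i" using U u by auto
    moreover have "chainC n u \<subseteq> C j" using closed[OF that(2) that(4)] m chainC_ch[OF ou(1)] by auto
    ultimately show ?thesis using exact ou that by blast
  qed
  have cover: "\<exists>i\<le>k. m \<in> C i" if "m \<in> {1..2*n}" for m
  proof -
    have "m > 0" using that by auto
    then have o: "odd (ch m)" "ch m \<le> 2*n" using ch1[of m] ch_le[of m] that by auto
    then obtain i where "i \<le> k" "chainC n (ch m) \<subseteq> C i" using exact by blast
    moreover have "m \<in> chainC n (ch m)" using chainC_ch[OF o(1)] that by auto
    ultimately show ?thesis by auto
  qed
  define T where "T i = C i \<inter> {n+1..2*n}" for i
  have bound: "card B \<le> card (T i)" if "i \<le> k" "B \<subseteq> C i" "primitive B" for i B
  proof -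
    have Bs: "B \<subseteq> {1..2*n}" using sub that by auto
    have inj: "inj_on ch B" using prim_inj[OF that(3) Bs] .
    have "ch ` B \<subseteq> ch ` T i"
    proof
      fix x assume "x \<in> ch ` B"
      then obtain b where b: "b \<in> B" "x = ch b" by auto
      then have "b > 0" "b \<le> 2*n" using Bs by auto
      then have "x \<in> Odd n" unfolding Odd_def using ch1[of b] ch_le[of b] b by auto
      then obtain t where t: "t \<in> {n+1..2*n}" "ch t = x" using ch_top by (metis imageE)
      then have "t \<in> C i" using closed[OF that(1), of b t] b that(2) by auto
      then show "x \<in> ch ` T i" using t unfolding T_def by auto
    qed
    then have "card (ch ` B) \<le> card (ch ` T i)" by (intro card_mono) (auto simp: T_def)
    also have "\<dots> \<le> card (T i)" by (rule card_image_le) (auto simp: T_def)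
    finally show ?thesis using card_image[OF inj] by simp
  qed
  have Tprim: "primitive (T i)" for i using top_prim unfolding T_def primitive_def by auto
  have Tsub: "T i \<subseteq> C i" for i unfolding T_def by auto
  have finC: "finite (C i)" if "i \<le> k" for i using sub that by (meson finite_subset finite_atLeastAtMost)
  have Cun: "{1..2*n} = (\<Union>i\<in>{..k}. C i)"
  proof
    show "{1..2*n} \<subseteq> (\<Union>i\<in>{..k}. C i)"
    proof
      fix m assume "m \<in> {1..2*n}"
      then obtain i where "i \<le> k" "m \<in> C i" using cover by blast
      then show "m \<in> (\<Union>i\<in>{..k}. C i)" by auto
    qed
    show "(\<Union>i\<in>{..k}. C i) \<subseteq> {1..2*n}" using sub by auto
  qed
  have sumT: "(\<Sum>i\<in>{..k}. card (T i)) = n"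
  proof -
    have "{n+1..2*n} = (\<Union>i\<in>{..k}. T i)" using Cun unfolding T_def by auto
    moreover have "card {n+1..2*n} = n" by simp
    ultimately have "n = card (\<Union>i\<in>{..k}. T i)" by metis
    also have "\<dots> = (\<Sum>i\<in>{..k}. card (T i))"
    proof (rule card_UN_disjoint)
      show "\<forall>i\<in>{..k}. finite (T i)" unfolding T_def by auto
      show "\<forall>i\<in>{..k}. \<forall>j\<in>{..k}. i \<noteq> j \<longrightarrow> T i \<inter> T j = {}"
        unfolding T_def using disj by blast
    qed simp
    finally show ?thesis by simp
  qed
  have Cfin: "finite (C i)" if "i \<le> k" for i using finC that .
  have Tfin: "finite (T i)" for i unfolding T_def by auto
  have Ts12: "T i \<subseteq> {1..2*n}" for i unfolding T_def by auto
  define P where "P = {A. A \<subseteq> {1..2*n} \<and> primitive A \<and> card A = n}"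
  have finP: "finite P" unfolding P_def by (rule finite_subset[of _ "Pow {1..2*n}"]) auto
  have eqA: "card (A \<inter> C i) = card (T i)" if A: "A \<in> P" and i: "i \<le> k" for A i
  proof -
    have le: "card (A \<inter> C j) \<le> card (T j)" if "j \<in> {..k}" for j
      using bound[of j "A \<inter> C j"] A that unfolding P_def primitive_def by auto
    have "A = (\<Union>j\<in>{..k}. A \<inter> C j)" using A Cun unfolding P_def by auto
    then have "card A = card (\<Union>j\<in>{..k}. A \<inter> C j)" by simp
    also have "\<dots> = (\<Sum>j\<in>{..k}. card (A \<inter> C j))"
    proof (rule card_UN_disjoint)
      show "\<forall>j\<in>{..k}. finite (A \<inter> C j)" using Cfin by auto
      show "\<forall>i\<in>{..k}. \<forall>j\<in>{..k}. i \<noteq> j \<longrightarrow> A \<inter> C i \<inter> (A \<inter> C j) = {}"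
        using disj by blast
    qed simp
    finally have s: "(\<Sum>j\<in>{..k}. card (A \<inter> C j)) = (\<Sum>j\<in>{..k}. card (T j))"
      using sumT A unfolding P_def by simp
    show ?thesis
    proof (rule ccontr)
      assume "card (A \<inter> C i) \<noteq> card (T i)"
      then have "card (A \<inter> C i) < card (T i)" using le[of i] i by simp
      then have "(\<Sum>j\<in>{..k}. card (A \<inter> C j)) < (\<Sum>j\<in>{..k}. card (T j))"
        using i le by (intro sum_strict_mono_ex1) auto
      then show False using s by simp
    qed
  qed
  have maxA: "max_prim (C i) (A \<inter> C i)" if A: "A \<in> P" and i: "i \<le> k" for A i
    unfolding max_prim_def
  proof (intro conjI allI impI)
    show "A \<inter> C i \<subseteq> C i" by auto
    show "primitive (A \<inter> C i)" using A unfolding P_def primitive_def by auto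
    fix B assume "B \<subseteq> C i \<and> primitive B"
    then show "card B \<le> card (A \<inter> C i)" using bound[OF i] eqA[OF A i] by auto
  qed
  have maxcard: "card B = card (T i)" if "i \<le> k" "max_prim (C i) B" for i B
  proof -
    have "card (T i) \<le> card B" using that(2) Tprim Tsub unfolding max_prim_def by auto
    moreover have "card B \<le> card (T i)" using bound[OF that(1)] that(2) unfolding max_prim_def by auto
    ultimately show ?thesis by simp
  qed
  have fnP: "fn n = card P" unfolding fn_def P_def by simp
  have upper: "fn n \<le> 2 ^ card (C 0) * (\<Prod>i=1..k. fX (C i))"
  proof -
    define S where "S = Pow (C 0) \<times> PiE {1..k} (\<lambda>i. {B. max_prim (C i) B})"
    define \<Phi> where "\<Phi> A = (A \<inter> C 0, restrict (\<lambda>i. A \<inter> C i) {1..k})" for A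
    have fmp: "finite {B. max_prim (C i) B}" if "i \<in> {1..k}" for i
    proof -
      have "finite (Pow (C i))" using Cfin[of i] that by simp
      moreover have "{B. max_prim (C i) B} \<subseteq> Pow (C i)" unfolding max_prim_def by blast
      ultimately show ?thesis by (rule finite_subset[rotated])
    qed
    have finS: "finite S" unfolding S_def
    proof (rule finite_cartesian_product)
      show "finite (Pow (C 0))" using Cfin[of 0] by simp
      show "finite (PiE {1..k} (\<lambda>i. {B. max_prim (C i) B}))"
        by (rule finite_PiE) (simp, rule fmp)
    qed
    have img: "\<Phi> ` P \<subseteq> S" unfolding S_def \<Phi>_def using maxA by auto
    have inj: "inj_on \<Phi> P"
    proof (rule inj_onI)
      fix A A' assume AA: "A \<in> P" "A' \<in> P" "\<Phi> A = \<Phi> A'"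
      have e: "A \<inter> C i = A' \<inter> C i" if "i \<le> k" for i
      proof (cases "i = 0")
        case True then show ?thesis using AA(3) unfolding \<Phi>_def by simp
      next
        case False
        then have "i \<in> {1..k}" using that by auto
        then show ?thesis using AA(3) unfolding \<Phi>_def by (metis restrict_apply' snd_conv)
      qed
      have "A = (\<Union>j\<in>{..k}. A \<inter> C j)" using AA Cun unfolding P_def by auto
      also have "\<dots> = (\<Union>j\<in>{..k}. A' \<inter> C j)" using e by auto
      also have "\<dots> = A'" using AA Cun unfolding P_def by auto
      finally show "A = A'" .
    qed
    have "card P \<le> card S" using card_inj_on_le[OF inj img finS] .
    also have "card S = 2 ^ card (C 0) * (\<Prod>i=1..k. fX (C i))"
      unfolding S_def fX_def using Cfin[of 0]
      by (simp add: card_cartesian_product card_PiE card_Pow)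
    finally show ?thesis using fnP by simp
  qed
  have lower: "(\<Prod>i=1..k. fstar n (C i)) \<le> fn n"
  proof -
    define Q where "Q i = {A. max_prim (C i) A \<and> (\<forall>a\<in>A. \<forall>m\<in>{1..2*n}. a dvd m \<longrightarrow> m \<in> C i)}" for i
    define G where "G g i = (if i = 0 then T 0 else g i)" for g :: "nat \<Rightarrow> nat set" and i
    define \<Psi> where "\<Psi> g = (\<Union>i\<in>{..k}. G g i)" for g
    have Gsub: "G g i \<subseteq> C i" if "g \<in> PiE {1..k} Q" "i \<le> k" for g i
      using that Tsub unfolding G_def Q_def max_prim_def by (auto simp: PiE_iff)
    have Gcard: "card (G g i) = card (T i)" if "g \<in> PiE {1..k} Q" "i \<le> k" for g i
      using that maxcard unfolding G_def Q_def by (auto simp: PiE_iff)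
    have PsiC: "\<Psi> g \<inter> C i = g i" if g: "g \<in> PiE {1..k} Q" and i: "i \<in> {1..k}" for g i
    proof
      show "g i \<subseteq> \<Psi> g \<inter> C i" using Gsub[OF g, of i] i unfolding \<Psi>_def G_def by force
      show "\<Psi> g \<inter> C i \<subseteq> g i"
      proof
        fix x assume x: "x \<in> \<Psi> g \<inter> C i"
        then obtain j where j: "j \<le> k" "x \<in> G g j" unfolding \<Psi>_def by auto
        then have "x \<in> C j" using Gsub[OF g] by auto
        then have "j = i" using disj[of j i x] x j i by auto
        then show "x \<in> g i" using j i unfolding G_def by auto
      qed
    qed
    have img: "\<Psi> ` PiE {1..k} Q \<subseteq> P"
    proof
      fix A assume "A \<in> \<Psi> ` PiE {1..k} Q"
      then obtain g where g: "g \<in> PiE {1..k} Q" and A: "A = \<Psi> g" by auto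
      have As: "A \<subseteq> {1..2*n}" using Gsub[OF g] sub unfolding A \<Psi>_def by fastforce
      have "card A = (\<Sum>i\<in>{..k}. card (G g i))" unfolding A \<Psi>_def
      proof (rule card_UN_disjoint)
        show "\<forall>i\<in>{..k}. finite (G g i)" using Gsub[OF g] Cfin finite_subset by blast
        show "\<forall>i\<in>{..k}. \<forall>j\<in>{..k}. i \<noteq> j \<longrightarrow> G g i \<inter> G g j = {}"
          using Gsub[OF g] disj by blast
      qed simp
      also have "\<dots> = n" using Gcard[OF g] sumT by simp
      finally have cA: "card A = n" .
      have pA: "primitive A" unfolding primitive_def
      proof (intro ballI impI)
        fix a b assume ab: "a \<in> A" "b \<in> A" "a dvd b"
        obtain i where i: "i \<le> k" "a \<in> G g i" using ab(1) unfolding A \<Psi>_def by auto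
        obtain j where j: "j \<le> k" "b \<in> G g j" using ab(2) unfolding A \<Psi>_def by auto
        have b12: "b \<in> {1..2*n}" using ab(2) As by auto
        show "a = b"
        proof (cases "i = 0")
          case True
          then have a: "a \<in> {n+1..2*n}" using i unfolding G_def T_def by auto
          have "a \<le> b" using ab(3) b12 by (intro dvd_imp_le) auto
          then have "b \<in> {n+1..2*n}" using a b12 by auto
          then show ?thesis using top_prim a ab(3) unfolding primitive_def by blast
        next
          case False
          then have gi: "a \<in> g i" "i \<in> {1..k}" using i unfolding G_def by auto
          then have "g i \<in> Q i" using g by auto
          then have "b \<in> C i" and pg: "primitive (g i)" using gi ab(3) b12 unfolding Q_def max_prim_def by auto
          then have "b \<in> \<Psi> g \<inter> C i" using ab(2) A by auto
          then have "b \<in> g i" using PsiC[OF g gi(2)] by simp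
          then show ?thesis using pg gi ab(3) unfolding primitive_def by blast
        qed
      qed
      show "A \<in> P" unfolding P_def using As cA pA by auto
    qed
    have inj: "inj_on \<Psi> (PiE {1..k} Q)"
    proof (rule inj_onI)
      fix g g' assume gg: "g \<in> PiE {1..k} Q" "g' \<in> PiE {1..k} Q" "\<Psi> g = \<Psi> g'"
      show "g = g'"
      proof
        fix i show "g i = g' i"
        proof (cases "i \<in> {1..k}")
          case True then show ?thesis using PsiC[OF gg(1) True] PsiC[OF gg(2) True] gg(3) by metis
        next
          case False then show ?thesis using PiE_arb[OF gg(1) False] PiE_arb[OF gg(2) False] by simp
        qed
      qed
    qed
    have "card (PiE {1..k} Q) = (\<Prod>i=1..k. fstar n (C i))"
      by (simp add: card_PiE fstar_def Q_def)
    moreover have "card (PiE {1..k} Q) \<le> card P" using card_inj_on_le[OF inj img finP] .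
    ultimately show ?thesis using fnP by simp
  qed
  show ?thesis using upper lower by simp
qed

end
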